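(* Let $d\ge1$ and $i\in\{1,\dots,d\}$. There is a constant $C$ such that for every admissible ball $B\subset\mathbb R^d$ and every $y\in B$, $$ r_B\int_{\mathbb R^d\setminus 2B}\Big|\int_0^1\nabla_y\Big(\frac{\phi_i(r,x,y)\,e^{-|\phi(r,x,y)|^2}}{(1-r^2)^{(d+1)/2}}+x_i\,e^{-|x|^2}\Big)\,d\rho(r)\Big|\,dx\le C.$$
   Context: For $x,y\in\mathbb R^d$ and $r\in(0,1)$ let $\phi(r,x,y)=\dfrac{ry-x}{\sqrt{1-r^2}}\in\mathbb R^d$, with components $\phi_i$. The measure $\rho$ on $(0,1)$ is $d\rho(r)=\dfrac{dr}{r\sqrt{-\log r}}$. A Euclidean ball $B$ with centre $c_B$ and radius $r_B$ is admissible if $r_B\le\min(1,1/|c_B|)$. $2B$ is the concentric ball of radius $2r_B$. *)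

theory Defs
  imports "HOL-Analysis.Analysis"
begin

definition phi :: "real \<Rightarrow> real^'n \<Rightarrow> real^'n \<Rightarrow> real^'n" where
  "phi r x y = (1 / sqrt (1 - r\<^sup>2)) *\<^sub>R (r *\<^sub>R y - x)"

definition grad :: "(real^'n \<Rightarrow> real) \<Rightarrow> real^'n \<Rightarrow> real^'n" where
  "grad f y = (\<chi> j. deriv (\<lambda>t. f (y + t *\<^sub>R axis j 1)) 0)"

text \<open>Admissible ball: 0 < r_B and r_B \<le> min(1, 1/|c_B|), with 1/0 = infinity.\<close>
definition admissible :: "real^'n \<Rightarrow> real \<Rightarrow> bool" where
  "admissible c rB \<longleftrightarrow> 0 < rB \<and> rB \<le> 1 \<and> rB * norm c \<le> 1"

definition kern :: "'n \<Rightarrow> real \<Rightarrow> real^'n \<Rightarrow> real^'n \<Rightarrow> real" where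
  "kern i r x y = (phi r x y $ i) * exp (- (norm (phi r x y))\<^sup>2)
       / (1 - r\<^sup>2) powr ((real CARD('n) + 1) / 2) + x $ i * exp (- (norm x)\<^sup>2)"

text \<open>Integral over (0,1) against d rho(r) = dr / (r sqrt(-log r)).\<close>
definition inner_int :: "'n \<Rightarrow> real^'n \<Rightarrow> real^'n \<Rightarrow> real^'n" where
  "inner_int i x y = (LINT r:{0<..<1}|lborel.
       (1 / (r * sqrt (- ln r))) *\<^sub>R grad (\<lambda>z. kern i r x z) y)"

end

theory Submission
  imports Defs "HOL-Probability.Distributions"
begin


lemma phi_shift:
  "phi r x (y + t *\<^sub>R axis j 1) = phi r x y + (t * (r / sqrt (1 - r\<^sup>2))) *\<^sub>R axis j (1::real)"
  unfolding phi_def by (simp add: algebra_simps)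

lemma norm_shift_sq:
  fixes a :: "real^'n"
  shows "(norm (a + w *\<^sub>R axis j 1))\<^sup>2 = (norm a)\<^sup>2 + 2 * w * a$j + w\<^sup>2"
  unfolding power2_norm_eq_inner by (simp add: inner_add_left inner_add_right inner_axis inner_axis' power2_eq_square algebra_simps)

lemma deriv_aux:
  fixes A N c aj d K B :: real
  shows "((\<lambda>t. (A + t * c * d) * exp (- (N + 2 * (t*c) * aj + (t*c)\<^sup>2)) * K + B) has_real_derivative
       c * (d - 2 * A * aj) * exp (- N) * K) (at 0)"
  by (rule derivative_eq_intros refl | simp)+ (simp add: algebra_simps)

lemma grad_kern:
  fixes i :: "'n::finite" and r :: real and x y :: "real^'n"
  defines "a \<equiv> phi r x y" and "c \<equiv> r / sqrt (1 - r\<^sup>2)" and "P \<equiv> (1 - r\<^sup>2) powr ((real CARD('n) + 1) / 2)"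
  shows "grad (\<lambda>z. kern i r x z) y = (\<chi> j. c * ((if j = i then 1 else 0) - 2 * a$i * a$j) * exp (- (norm a)\<^sup>2) / P)"
proof -
  have "deriv (\<lambda>t. kern i r x (y + t *\<^sub>R axis j 1)) 0 = c * ((if j = i then 1 else 0) - 2 * a$i * a$j) * exp (- (norm a)\<^sup>2) / P" for j
  proof -
    have eq: "(\<lambda>t. kern i r x (y + t *\<^sub>R axis j 1)) = (\<lambda>t. (a$i + t * c * (if j = i then 1 else 0)) * exp (- ((norm a)\<^sup>2 + 2 * (t*c) * a$j + (t*c)\<^sup>2)) * (1/P) + x $ i * exp (- (norm x)\<^sup>2))"
      apply (rule ext)
      apply (simp only: kern_def phi_shift norm_shift_sq)
      by (simp add: a_def c_def P_def axis_def algebra_simps add_divide_distrib)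
    have "((\<lambda>t. (a$i + t * c * (if j = i then 1 else 0)) * exp (- ((norm a)\<^sup>2 + 2 * (t*c) * a$j + (t*c)\<^sup>2)) * (1/P) + x $ i * exp (- (norm x)\<^sup>2)) has_real_derivative
       c * ((if j = i then 1 else 0) - 2 * a$i * a$j) * exp (- (norm a)\<^sup>2) / P) (at 0)"
      using deriv_aux[of "a$i" c "if j = i then 1 else 0" "(norm a)\<^sup>2" "a$j" "1/P" "x $ i * exp (- (norm x)\<^sup>2)"]
      by (simp add: mult.commute mult.left_commute)
    then show ?thesis unfolding eq by (rule DERIV_imp_deriv)
  qed
  then show ?thesis unfolding grad_def by simp
qed



lemma w_le_exp: "0 \<le> (w::real) \<Longrightarrow> w \<le> exp (w/2)"
proof -
  assume w: "0 \<le> w"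
  have "exp (w/2) = exp (w/4)^2" by (simp add: exp_double[symmetric] power2_eq_square exp_add[symmetric])
  moreover have "1 + w/4 \<le> exp (w/4)" by (rule exp_ge_add_one_self)
  then have "(1 + w/4)^2 \<le> exp (w/4)^2" using w by (intro power_mono) auto
  moreover have "w \<le> (1 + w/4)^2" proof - have "0 \<le> (1 - w/4)^2" by simp then show ?thesis by (simp add: power2_eq_square algebra_simps) qed
  ultimately show ?thesis by linarith
qed

lemma scalar_bound: "0 \<le> (w::real) \<Longrightarrow> (1 + 2*w) * exp (-w) \<le> 3 * exp (-w/2)"
proof -
  assume w: "0 \<le> w"
  have e: "exp (-w) = exp (-w/2) * exp (-w/2)" by (simp add: exp_add[symmetric])
  have "w * exp (-w/2) \<le> 1"
    using w_le_exp[OF w] by (simp add: exp_minus field_simps)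
  moreover have "exp (-w/2) \<le> 1" using w by simp
  ultimately have "exp (-w/2) + 2 * (w * exp (-w/2)) \<le> 3" by linarith
  then have "exp (-w/2) * (exp (-w/2) + 2 * (w * exp (-w/2))) \<le> exp (-w/2) * 3"
    by (intro mult_left_mono) auto
  then show ?thesis unfolding e by (simp add: algebra_simps)
qed

lemma norm_grad_bound:
  fixes i :: "'n::finite" and r :: real and x y :: "real^'n"
  assumes r: "0 < r" "r < 1"
  shows "norm (grad (\<lambda>z. kern i r x z) y) \<le> 3 * real CARD('n) * (r / sqrt (1 - r\<^sup>2)) * exp (- (norm (phi r x y))\<^sup>2 / 2)
           / (1 - r\<^sup>2) powr ((real CARD('n) + 1) / 2)"
proof -
  define a where "a = phi r x y"
  define c where "c = r / sqrt (1 - r\<^sup>2)"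
  define P where "P = (1 - r\<^sup>2) powr ((real CARD('n) + 1) / 2)"
  have r2: "r\<^sup>2 < 1" using r by (simp add: power_less_one_iff abs_less_iff)
  have c0: "0 \<le> c" using r r2 by (simp add: c_def)
  have P0: "0 < P" using r2 by (simp add: P_def)
  have comp: "\<bar>c * ((if j = i then 1 else 0) - 2 * a$i * a$j) * exp (- (norm a)\<^sup>2) / P\<bar>
      \<le> c * 3 * exp (- (norm a)\<^sup>2 / 2) / P" for j
  proof -
    have ai: "\<bar>a$i\<bar> \<le> norm a" "\<bar>a$j\<bar> \<le> norm a" by (rule component_le_norm_cart)+
    have "\<bar>a$i * a$j\<bar> \<le> norm a * norm a" unfolding abs_mult
      using ai by (intro mult_mono) auto
    then have h: "- (norm a * norm a) \<le> a$i * a$j \<and> a$i * a$j \<le> norm a * norm a"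
      unfolding abs_mult[symmetric] by (auto simp: abs_le_iff)
    moreover have "0 \<le> a$i * a$i" by simp
    ultimately have "\<bar>(if j = i then 1 else 0) - 2 * a$i * a$j\<bar> \<le> 1 + 2 * (norm a)\<^sup>2"
      unfolding power2_eq_square by (auto simp: abs_le_iff)
    then have "\<bar>(if j = i then 1 else 0) - 2 * a$i * a$j\<bar> * exp (- (norm a)\<^sup>2) \<le> (1 + 2 * (norm a)\<^sup>2) * exp (- (norm a)\<^sup>2)"
      by (intro mult_right_mono) auto
    also have "\<dots> \<le> 3 * exp (- (norm a)\<^sup>2 / 2)" by (rule scalar_bound) simp
    finally have "c * (\<bar>(if j = i then 1 else 0) - 2 * a$i * a$j\<bar> * exp (- (norm a)\<^sup>2)) \<le> c * (3 * exp (- (norm a)\<^sup>2 / 2))"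
      using c0 by (intro mult_left_mono) auto
    then show ?thesis using c0 P0 by (simp add: abs_mult divide_right_mono mult.assoc)
  qed
  have "norm (grad (\<lambda>z. kern i r x z) y) \<le> (\<Sum>j::'n\<in>UNIV. c * 3 * exp (- (norm a)\<^sup>2 / 2) / P)"
    unfolding grad_kern a_def[symmetric] c_def[symmetric] P_def[symmetric]
    apply (rule order_trans[OF norm_le_l1_cart])
    apply (rule sum_mono)
    apply (simp only: vec_lambda_beta)
    by (rule comp)
  then show ?thesis by (simp add: a_def c_def P_def mult_ac)
qed



definition Kf :: "real \<Rightarrow> real \<Rightarrow> real" where
  "Kf d r = 3 * d / (sqrt (1 - r) * sqrt (1 - r\<^sup>2) * (1 - r\<^sup>2) powr ((d + 1) / 2))"

definition Hf :: "real \<Rightarrow> real^'n \<Rightarrow> real^'n \<Rightarrow> real \<Rightarrow> real" where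
  "Hf d y x r = Kf d r * exp (- (norm (r *\<^sub>R y - x))\<^sup>2 / (2 * (1 - r\<^sup>2)))"

lemma integrand_bound:
  fixes i :: "'n::finite" and r :: real and x y :: "real^'n"
  assumes r: "0 < r" "r < 1"
  shows "norm ((1 / (r * sqrt (- ln r))) *\<^sub>R grad (\<lambda>z. kern i r x z) y) \<le> Hf (real CARD('n)) y x r"
proof -
  define s where "s = sqrt (1 - r\<^sup>2)"
  define P where "P = (1 - r\<^sup>2) powr ((real CARD('n) + 1) / 2)"
  define E where "E = exp (- (norm (phi r x y))\<^sup>2 / 2)"
  have r2: "r\<^sup>2 < 1" using r by (simp add: power_less_one_iff abs_less_iff)
  have s0: "0 < s" using r2 by (simp add: s_def)
  have P0: "0 < P" using r2 by (simp add: P_def)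
  have E0: "0 < E" by (simp add: E_def)
  have ln1: "1 - r \<le> - ln r" using ln_le_minus_one[OF r(1)] by simp
  have sq: "sqrt (1 - r) \<le> sqrt (- ln r)" using ln1 by simp
  have sq0: "0 < sqrt (1 - r)" using r by simp
  have "norm ((1 / (r * sqrt (- ln r))) *\<^sub>R grad (\<lambda>z. kern i r x z) y)
       = (1 / (r * sqrt (- ln r))) * norm (grad (\<lambda>z. kern i r x z) y)"
    using r sq sq0 by simp
  also have "\<dots> \<le> (1 / (r * sqrt (1 - r))) * (3 * real CARD('n) * (r / s) * E / P)"
  proof (rule mult_mono)
    show "1 / (r * sqrt (- ln r)) \<le> 1 / (r * sqrt (1 - r))"
      using r sq sq0 by (intro divide_left_mono mult_left_mono mult_pos_pos) auto
    show "norm (grad (kern i r x) y) \<le> 3 * real CARD('n) * (r / s) * E / P"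
      using norm_grad_bound[OF r, of i x y] by (simp add: s_def E_def P_def)
  qed (use r sq0 in auto)
  also have "\<dots> = 3 * real CARD('n) / (sqrt (1 - r) * s * P) * E"
    using r by (simp add: field_simps)
  also have "E = exp (- (norm (r *\<^sub>R y - x))\<^sup>2 / (2 * (1 - r\<^sup>2)))"
  proof -
    have "norm (phi r x y) = norm (r *\<^sub>R y - x) / s"
      unfolding phi_def s_def using s0 s_def by simp
    then have "(norm (phi r x y))\<^sup>2 = (norm (r *\<^sub>R y - x))\<^sup>2 / (1 - r\<^sup>2)"
      using r2 by (simp add: power_divide s_def)
    then show ?thesis by (simp add: E_def)
  qed
  finally show ?thesis by (simp add: Hf_def Kf_def s_def P_def)
qed

lemma inner_int_bound:
  fixes i :: "'n::finite" and x y :: "real^'n"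
  shows "ennreal (norm (inner_int i x y)) \<le>
     (\<integral>\<^sup>+ r. indicator {0<..<1} r * ennreal (Hf (real CARD('n)) y x r) \<partial>lborel)"
proof -
  define g where "g = (\<lambda>r::real. indicator {0<..<1} r *\<^sub>R ((1 / (r * sqrt (- ln r))) *\<^sub>R grad (\<lambda>z. kern i r x z) y))"
  have ii: "inner_int i x y = integral\<^sup>L lborel g"
    unfolding inner_int_def set_lebesgue_integral_def g_def ..
  show ?thesis
  proof (cases "integrable lborel g")
    case True
    have "ennreal (norm (inner_int i x y)) \<le> (\<integral>\<^sup>+r. norm (g r) \<partial>lborel)"
      unfolding ii by (rule integral_norm_bound_ennreal[OF True])
    also have "\<dots> \<le> (\<integral>\<^sup>+ r. indicator {0<..<1} r * ennreal (Hf (real CARD('n)) y x r) \<partial>lborel)"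
    proof (rule nn_integral_mono)
      fix r :: real
      show "ennreal (norm (g r)) \<le> indicator {0<..<1} r * ennreal (Hf (real CARD('n)) y x r)"
        using integrand_bound[of r i x y] by (auto simp: g_def indicator_def intro!: ennreal_leI)
    qed
    finally show ?thesis .
  next
    case False
    then show ?thesis unfolding ii by (simp add: not_integrable_integral_eq)
  qed
qed



lemma gauss1_fin: "(\<integral>\<^sup>+ t. ennreal (exp (- t\<^sup>2 / 4)) \<partial>(lborel::real measure)) < \<infinity>"
proof -
  have i: "integrable lborel (\<lambda>t. sqrt (4 * pi) * normal_density 0 (sqrt 2) t)"
    by (intro integrable_mult_right integrable_normal_density) auto
  have eq: "(\<lambda>t. sqrt (4 * pi) * normal_density 0 (sqrt 2) t) = (\<lambda>t. exp (- t\<^sup>2 / 4))"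
    by (rule ext) (simp add: normal_density_def)
  from integrableD(2)[OF i[unfolded eq]] show ?thesis by (simp add: top.not_eq_extremum)
qed

lemma gauss_fin: "(\<integral>\<^sup>+ z. ennreal (exp (- (norm z)\<^sup>2 / 4)) \<partial>(lborel::'a::euclidean_space measure)) < \<infinity>"
proof -
  have "(\<lambda>z::'a. ennreal (exp (- (norm z)\<^sup>2 / 4))) = (\<lambda>z. \<Prod>b\<in>Basis. ennreal (exp (- (z \<bullet> b)\<^sup>2 / 4)))"
  proof (rule ext)
    fix z :: 'a
    have "(norm z)\<^sup>2 = (\<Sum>b\<in>Basis. (z \<bullet> b)\<^sup>2)"
      unfolding power2_norm_eq_inner by (subst euclidean_inner) (simp add: power2_eq_square)
    then have "exp (- (norm z)\<^sup>2 / 4) = (\<Prod>b\<in>Basis. exp (- (z \<bullet> b)\<^sup>2 / 4))"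
      by (simp add: exp_sum[symmetric] sum_divide_distrib[symmetric] sum_negf)
    then show "ennreal (exp (- (norm z)\<^sup>2 / 4)) = (\<Prod>b\<in>Basis. ennreal (exp (- (z \<bullet> b)\<^sup>2 / 4)))"
      by (simp add: prod_ennreal)
  qed
  then have "(\<integral>\<^sup>+ z. ennreal (exp (- (norm z)\<^sup>2 / 4)) \<partial>(lborel::'a measure)) = (\<integral>\<^sup>+ z. (\<Prod>b\<in>Basis. ennreal (exp (- (z \<bullet> b)\<^sup>2 / 4))) \<partial>(lborel::'a measure))"
    by (simp only:)
  also have "\<dots> = (\<Prod>b\<in>(Basis::'a set). (\<integral>\<^sup>+ t. ennreal (exp (- t\<^sup>2 / 4)) \<partial>lborel))"
    by (rule nn_integral_lborel_prod) auto
  also have "\<dots> < \<infinity>" using gauss1_fin by (simp add: less_top[symmetric] ennreal_prod_eq_top power_eq_top_ennreal)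
  finally show ?thesis .
qed

lemma nn_affine:
  fixes f :: "'a::euclidean_space \<Rightarrow> ennreal"
  assumes [measurable]: "f \<in> borel_measurable borel" and c: "c \<noteq> 0"
  shows "(\<integral>\<^sup>+x. f x \<partial>lborel) = ennreal (\<bar>c\<bar>^DIM('a)) * (\<integral>\<^sup>+x. f (t + c *\<^sub>R x) \<partial>lborel)"
  by (subst lborel_affine[OF c, of t]) (simp add: nn_integral_density nn_integral_distr nn_integral_cmult)




definition Mg :: "'n::finite itself \<Rightarrow> ennreal" where
  "Mg _ = (\<integral>\<^sup>+ z. ennreal (exp (- (norm z)\<^sup>2 / 4)) \<partial>(lborel::(real^'n) measure))"

lemma X_subst:
  fixes c y :: "real^'n" and r rB :: real
  assumes r: "0 < r" "r < 1"
  shows "(\<integral>\<^sup>+ x. indicator (- ball c (2*rB)) x * ennreal (exp (- (norm (r *\<^sub>R y - x))\<^sup>2 / (2 * (1 - r\<^sup>2)))) \<partial>lborel)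
    = ennreal (sqrt (1 - r\<^sup>2) ^ CARD('n)) *
      (\<integral>\<^sup>+ z. indicator (- ball c (2*rB)) (r *\<^sub>R y + sqrt (1 - r\<^sup>2) *\<^sub>R z) * ennreal (exp (- (norm z)\<^sup>2 / 2)) \<partial>lborel)"
proof -
  define s where "s = sqrt (1 - r\<^sup>2)"
  have r2: "r\<^sup>2 < 1" using r by (simp add: power_less_one_iff abs_less_iff)
  have s0: "0 < s" using r2 by (simp add: s_def)
  have ss: "s\<^sup>2 = 1 - r\<^sup>2" using r2 by (simp add: s_def)
  have "(\<integral>\<^sup>+ x. indicator (- ball c (2*rB)) x * ennreal (exp (- (norm (r *\<^sub>R y - x))\<^sup>2 / (2 * (1 - r\<^sup>2)))) \<partial>lborel)
    = ennreal (\<bar>s\<bar> ^ DIM(real^'n)) * (\<integral>\<^sup>+ z. indicator (- ball c (2*rB)) (r *\<^sub>R y + s *\<^sub>R z) * ennreal (exp (- (norm (r *\<^sub>R y - (r *\<^sub>R y + s *\<^sub>R z)))\<^sup>2 / (2 * (1 - r\<^sup>2)))) \<partial>lborel)"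
    by (rule nn_affine) (use s0 in auto)
  also have "(\<lambda>z. indicator (- ball c (2*rB)) (r *\<^sub>R y + s *\<^sub>R z) * ennreal (exp (- (norm (r *\<^sub>R y - (r *\<^sub>R y + s *\<^sub>R z)))\<^sup>2 / (2 * (1 - r\<^sup>2)))))
      = (\<lambda>z. indicator (- ball c (2*rB)) (r *\<^sub>R y + s *\<^sub>R z) * ennreal (exp (- (norm z)\<^sup>2 / 2)))"
  proof (rule ext)
    fix z :: "real^'n"
    have n: "norm (r *\<^sub>R y - (r *\<^sub>R y + s *\<^sub>R z)) = s * norm z" using s0 by simp
    have eq: "- (s * norm z)\<^sup>2 / (2 * (1 - r\<^sup>2)) = - (norm z)\<^sup>2 / 2"
      unfolding ss[symmetric] using s0 by (simp add: power_mult_distrib field_simps)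
    show "indicator (- ball c (2*rB)) (r *\<^sub>R y + s *\<^sub>R z) * ennreal (exp (- (norm (r *\<^sub>R y - (r *\<^sub>R y + s *\<^sub>R z)))\<^sup>2 / (2 * (1 - r\<^sup>2))))
      = indicator (- ball c (2*rB)) (r *\<^sub>R y + s *\<^sub>R z) * ennreal (exp (- (norm z)\<^sup>2 / 2))" unfolding n eq ..
  qed
  finally show ?thesis using s0 by (simp add: s_def)
qed

lemma X_bound1:
  fixes c y :: "real^'n" and r rB :: real
  assumes r: "0 < r" "r < 1"
  shows "(\<integral>\<^sup>+ x. indicator (- ball c (2*rB)) x * ennreal (exp (- (norm (r *\<^sub>R y - x))\<^sup>2 / (2 * (1 - r\<^sup>2)))) \<partial>lborel)
    \<le> ennreal (sqrt (1 - r\<^sup>2) ^ CARD('n)) * Mg TYPE('n)"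
  unfolding X_subst[OF r] Mg_def
proof (intro mult_left_mono nn_integral_mono)
  fix z :: "real^'n"
  have "exp (- (norm z)\<^sup>2 / 2) \<le> exp (- (norm z)\<^sup>2 / 4)" by simp
  then show "indicator (- ball c (2*rB)) (r *\<^sub>R y + sqrt (1 - r\<^sup>2) *\<^sub>R z) * ennreal (exp (- (norm z)\<^sup>2 / 2)) \<le> ennreal (exp (- (norm z)\<^sup>2 / 4))"
    by (auto simp: indicator_def intro!: ennreal_leI)
qed simp

lemma X_bound2:
  fixes c y :: "real^'n" and r rB :: real
  assumes r: "0 < r" "r < 1" and y: "y \<in> ball c rB" and ry: "(1 - r) * norm y \<le> rB / 2"
  shows "(\<integral>\<^sup>+ x. indicator (- ball c (2*rB)) x * ennreal (exp (- (norm (r *\<^sub>R y - x))\<^sup>2 / (2 * (1 - r\<^sup>2)))) \<partial>lborel)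
    \<le> ennreal (sqrt (1 - r\<^sup>2) ^ CARD('n)) * (ennreal (exp (- rB\<^sup>2 / (16 * (1 - r\<^sup>2)))) * Mg TYPE('n))"
  unfolding X_subst[OF r] Mg_def
proof (intro mult_left_mono)
  define s where "s = sqrt (1 - r\<^sup>2)"
  have r2: "r\<^sup>2 < 1" using r by (simp add: power_less_one_iff abs_less_iff)
  have s0: "0 < s" using r2 by (simp add: s_def)
  have ss: "s\<^sup>2 = 1 - r\<^sup>2" using r2 by (simp add: s_def)
  have rB: "0 < rB" proof -
    have "0 \<le> dist c y" by simp
    moreover have "dist c y < rB" using y by simp
    ultimately show ?thesis by linarith
  qed
  have pt: "indicator (- ball c (2*rB)) (r *\<^sub>R y + s *\<^sub>R z) * ennreal (exp (- (norm z)\<^sup>2 / 2))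
     \<le> ennreal (exp (- rB\<^sup>2 / (16 * (1 - r\<^sup>2)))) * ennreal (exp (- (norm z)\<^sup>2 / 4))" for z :: "real^'n"
  proof (cases "r *\<^sub>R y + s *\<^sub>R z \<in> ball c (2*rB)")
    case True then show ?thesis by simp
  next
    case False
    have d1: "2 * rB \<le> dist c (r *\<^sub>R y + s *\<^sub>R z)" using False by simp
    have d2: "dist c y < rB" using y by simp
    have "dist c (r *\<^sub>R y + s *\<^sub>R z) \<le> dist c y + norm (r *\<^sub>R y + s *\<^sub>R z - y)"
      using dist_triangle[of c "r *\<^sub>R y + s *\<^sub>R z" y] by (simp add: dist_norm norm_minus_commute)
    also have "norm (r *\<^sub>R y + s *\<^sub>R z - y) \<le> norm (r *\<^sub>R y - y) + norm (s *\<^sub>R z)"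
      by (metis add_diff_eq diff_add_eq norm_triangle_ineq)
    also have "norm (r *\<^sub>R y - y) = (1 - r) * norm y"
    proof -
      have "r *\<^sub>R y - y = (r - 1) *\<^sub>R y" by (simp add: algebra_simps)
      then show ?thesis using r by simp
    qed
    also have "norm (s *\<^sub>R z) = s * norm z" using s0 by simp
    finally have "rB / 2 \<le> s * norm z" using d1 d2 ry by linarith
    then have "(rB / 2)\<^sup>2 \<le> (s * norm z)\<^sup>2" using rB by (intro power_mono) auto
    then have "rB\<^sup>2 / 4 \<le> (1 - r\<^sup>2) * (norm z)\<^sup>2" by (simp add: power_mult_distrib ss power_divide)
    then have "rB\<^sup>2 / (16 * (1 - r\<^sup>2)) \<le> (norm z)\<^sup>2 / 4" using r2 by (simp add: field_simps)
    then have "exp (- (norm z)\<^sup>2 / 2) \<le> exp (- rB\<^sup>2 / (16 * (1 - r\<^sup>2))) * exp (- (norm z)\<^sup>2 / 4)"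
      by (simp add: exp_add[symmetric])
    then show ?thesis
      by (simp add: ennreal_mult[symmetric] ennreal_leI indicator_def)
  qed
  show "(\<integral>\<^sup>+ z. indicator (- ball c (2*rB)) (r *\<^sub>R y + sqrt (1 - r\<^sup>2) *\<^sub>R z) * ennreal (exp (- (norm z)\<^sup>2 / 2)) \<partial>lborel)
    \<le> ennreal (exp (- rB\<^sup>2 / (16 * (1 - r\<^sup>2)))) * (\<integral>\<^sup>+ z. ennreal (exp (- (norm z)\<^sup>2 / 4)) \<partial>(lborel::(real^'n) measure))"
    unfolding s_def[symmetric]
    apply (subst nn_integral_cmult[symmetric])
     apply measurable
    apply (rule nn_integral_mono)
    apply (rule pt)
    done
qed simp




lemma Kf_s:
  fixes n :: nat and r :: real
  assumes r: "0 < r" "r < 1"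
  shows "Kf (real n) r * sqrt (1 - r\<^sup>2) ^ n = 3 * real n / (sqrt (1 - r) * (1 - r\<^sup>2))"
proof -
  define s where "s = sqrt (1 - r\<^sup>2)"
  have r2: "r\<^sup>2 < 1" using r by (simp add: power_less_one_iff abs_less_iff)
  have s0: "0 < s" using r2 by (simp add: s_def)
  have ss: "s\<^sup>2 = 1 - r\<^sup>2" using r2 by (simp add: s_def)
  have hs: "s = (1 - r\<^sup>2) powr (1/2)" using r2 by (simp add: s_def powr_half_sqrt)
  have "(1 - r\<^sup>2) powr ((real n + 1) / 2) = s powr (real n + 1)"
    unfolding hs powr_powr by simp
  also have "\<dots> = s ^ (n + 1)" using s0 powr_realpow[of s "Suc n"] by (simp add: add.commute)
  finally have P: "(1 - r\<^sup>2) powr ((real n + 1) / 2) = s ^ (n+1)" .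
  have u: "0 < sqrt (1 - r)" using r by simp
  show ?thesis
    unfolding Kf_def P unfolding s_def[symmetric] unfolding ss[symmetric] using s0 u
    by (simp add: field_simps power2_eq_square)
qed

lemma exp_neg_le: "0 < (w::real) \<Longrightarrow> exp (- w) \<le> 4 / w\<^sup>2"
proof -
  assume w: "0 < w"
  have "exp w = exp (w/2)^2" by (simp add: power2_eq_square exp_add[symmetric])
  moreover have "w/2 \<le> exp (w/2)" using exp_ge_add_one_self[of "w/2"] by linarith
  then have "(w/2)^2 \<le> exp (w/2)^2" using w by (intro power_mono) auto
  ultimately have "w\<^sup>2 / 4 \<le> exp w" by (simp add: power_divide)
  then show ?thesis using w by (simp add: exp_minus field_simps)
qed

definition Phi :: "real \<Rightarrow> real \<Rightarrow> real" where
  "Phi rB r = indicator {0..1 - rB\<^sup>2/4} r * (1 / ((1 - r) * sqrt (1 - r))) + indicator {1 - rB\<^sup>2/4..1} r * (1024 / rB^3)"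

lemma Phi_int:
  assumes rB: "0 < rB" "rB \<le> 1"
  shows "(\<integral>\<^sup>+ r. ennreal (Phi rB r) \<partial>lborel) \<le> ennreal (260 / rB)"
proof -
  define a0 where "a0 = rB\<^sup>2/4"
  have a0: "0 < a0" "a0 \<le> 1/4" using rB by (auto simp: a0_def power_le_one)
  have sa0: "sqrt a0 = rB / 2" using rB by (simp add: a0_def real_sqrt_divide)
  have m1[measurable]: "(\<lambda>r::real. 1 / ((1 - r) * sqrt (1 - r))) \<in> borel_measurable borel" by measurable
  have I1: "(\<integral>\<^sup>+ r. ennreal (1 / ((1 - r) * sqrt (1 - r))) * indicator {0..1 - a0} r \<partial>lborel)
      = ennreal (2 / sqrt (1 - (1 - a0)) - 2 / sqrt (1 - 0))"
  proof (rule nn_integral_FTC_Icc[OF m1])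
    fix r assume "r \<in> {0..1 - a0}"
    then have r1: "r < 1" using a0 by auto
    show "((\<lambda>r. 2 / sqrt (1 - r)) has_real_derivative 1 / ((1 - r) * sqrt (1 - r))) (at r)"
      using r1 by (auto intro!: derivative_eq_intros simp: field_simps)
    show "0 \<le> 1 / ((1 - r) * sqrt (1 - r))" using r1 by simp
  qed (use a0 in simp)
  have I2: "(\<integral>\<^sup>+ r. ennreal (1024 / rB^3) * indicator {1 - a0..1} r \<partial>lborel) = ennreal (1024 / rB^3 * a0)"
    using a0 rB by (simp add: nn_integral_cmult_indicator ennreal_mult[symmetric])
  have "(\<integral>\<^sup>+ r. ennreal (Phi rB r) \<partial>lborel)
     = (\<integral>\<^sup>+ r. ennreal (1 / ((1 - r) * sqrt (1 - r))) * indicator {0..1 - a0} r + ennreal (1024 / rB^3) * indicator {1 - a0..1} r \<partial>lborel)"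
  proof (rule nn_integral_cong)
    fix r :: real
    show "ennreal (Phi rB r) = ennreal (1 / ((1 - r) * sqrt (1 - r))) * indicator {0..1 - a0} r + ennreal (1024 / rB^3) * indicator {1 - a0..1} r"
      unfolding Phi_def a0_def[symmetric] using a0 rB
      by (auto simp: indicator_def ennreal_plus[symmetric] simp del: ennreal_plus)
  qed
  also have "\<dots> = ennreal (2 / sqrt (1 - (1 - a0)) - 2 / sqrt (1 - 0)) + ennreal (1024 / rB^3 * a0)"
    by (subst nn_integral_add) (auto simp: I1 I2)
  also have "\<dots> \<le> ennreal (260 / rB)"
  proof -
    have "2 / sqrt (1 - (1 - a0)) = 4 / rB" by (simp add: sa0)
    then have "2 / sqrt (1 - (1 - a0)) - 2 / sqrt (1 - 0) \<le> 4 / rB" by simp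
    moreover have "1024 / rB^3 * a0 = 256 / rB" using rB by (simp add: a0_def power2_eq_square power3_eq_cube)
    moreover have "0 \<le> 2 / sqrt (1 - (1 - a0)) - 2 / sqrt (1 - 0)"
    proof -
      have e: "2 / sqrt (1 - (1 - a0)) - 2 / sqrt (1 - 0) = 4/rB - 2" using \<open>2 / sqrt (1 - (1 - a0)) = 4 / rB\<close> by simp
      have "0 \<le> 4/rB - 2" using rB by (simp add: field_simps)
      then show ?thesis unfolding e .
    qed
    ultimately show ?thesis using rB by (simp add: ennreal_plus[symmetric] del: ennreal_plus)
  qed
  finally show ?thesis .
qed




lemma real_bound2:
  fixes r rB d :: real
  assumes r: "0 < r" "r < 1" and rB: "0 < rB" and u: "1 - r \<le> rB\<^sup>2 / 4" and d: "0 \<le> d"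
  shows "3 * d / (sqrt (1 - r) * (1 - r\<^sup>2)) * exp (- rB\<^sup>2 / (16 * (1 - r\<^sup>2))) \<le> 3 * d * (1024 / rB^3)"
proof -
  define q where "q = 1 - r\<^sup>2"
  define v where "v = sqrt (1 - r)"
  have r2: "r\<^sup>2 < 1" using r by (simp add: power_less_one_iff abs_less_iff)
  have q0: "0 < q" using r2 by (simp add: q_def)
  have v0: "0 < v" using r by (simp add: v_def)
  have vv: "v * v = 1 - r" using r by (simp add: v_def)
  have q2: "q \<le> 2 * (v * v)" unfolding vv q_def using r zero_le_power2[of "1 - r"] by (simp add: power2_eq_square algebra_simps)
  have vle: "v \<le> rB / 2"
  proof -
    have h: "(rB/2) * (rB/2) = rB\<^sup>2 / 4" by (simp add: power2_eq_square)
    have "v * v \<le> (rB/2) * (rB/2)" unfolding h vv using u .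
    then have "v\<^sup>2 \<le> (rB/2)\<^sup>2" unfolding power2_eq_square .
    moreover have "0 \<le> rB/2" using rB by simp
    ultimately show ?thesis by (rule power2_le_imp_le)
  qed
  have w0: "0 < rB\<^sup>2 / (16 * q)" using rB q0 by simp
  have ee: "4 / (rB\<^sup>2 / (16 * q))\<^sup>2 = 1024 * q\<^sup>2 / rB^4"
    using rB q0 by (simp add: power_divide field_simps power2_eq_square power4_eq_xxxx)
  have e: "exp (- rB\<^sup>2 / (16 * q)) \<le> 1024 * q\<^sup>2 / rB^4"
    using exp_neg_le[OF w0] unfolding ee by (simp only: minus_divide_left)
  have "3 * d / (v * q) * exp (- rB\<^sup>2 / (16 * q)) \<le> 3 * d / (v * q) * (1024 * q\<^sup>2 / rB^4)"
    using e d v0 q0 by (intro mult_left_mono) auto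
  also have "\<dots> = 3072 * d * q / (v * rB^4)" using v0 q0 by (simp add: field_simps power2_eq_square)
  also have "\<dots> \<le> 3072 * d * (2 * (v * v)) / (v * rB^4)"
    using q2 d v0 rB by (intro divide_right_mono mult_left_mono) auto
  also have "\<dots> = 6144 * d * v / rB^4" using v0 by (simp add: field_simps)
  also have "\<dots> \<le> 6144 * d * (rB / 2) / rB^4"
    using vle d rB by (intro divide_right_mono mult_left_mono) auto
  also have "\<dots> = 3 * d * (1024 / rB^3)" using rB by (simp add: field_simps power4_eq_xxxx power3_eq_cube)
  finally show ?thesis by (simp add: q_def v_def)
qed

lemma Kf_nonneg: "0 < r \<Longrightarrow> r < 1 \<Longrightarrow> 0 \<le> d \<Longrightarrow> 0 \<le> Kf d r"
proof -
  assume r: "0 < r" "r < 1" "0 \<le> d"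
  have r2: "r\<^sup>2 < 1" using r by (simp add: power_less_one_iff abs_less_iff)
  then show ?thesis unfolding Kf_def using r by (intro divide_nonneg_nonneg mult_nonneg_nonneg) auto
qed

lemma r_bound:
  fixes c y :: "real^'n" and rB r :: real
  assumes adm: "admissible c rB" and y: "y \<in> ball c rB"
  shows "(\<integral>\<^sup>+ x. indicator (- ball c (2*rB)) x * (indicator {0<..<1} r * ennreal (Hf (real CARD('n)) y x r)) \<partial>lborel)
     \<le> ennreal (3 * real CARD('n) * Phi rB r) * Mg TYPE('n)"
proof (cases "r \<in> {0<..<1}")
  case False
  then show ?thesis by simp
next
  case True
  then have r: "0 < r" "r < 1" by auto
  define d where "d = real CARD('n)"
  define s where "s = sqrt (1 - r\<^sup>2)"
  define X where "X = (\<integral>\<^sup>+ x. indicator (- ball c (2*rB)) x * ennreal (exp (- (norm (r *\<^sub>R y - x))\<^sup>2 / (2 * (1 - r\<^sup>2)))) \<partial>lborel)"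
  have rB: "0 < rB" "rB \<le> 1" "rB * norm c \<le> 1" using adm by (auto simp: admissible_def)
  have r2: "r\<^sup>2 < 1" using r by (simp add: power_less_one_iff abs_less_iff)
  have d0: "0 \<le> d" by (simp add: d_def)
  have K0: "0 \<le> Kf d r" using Kf_nonneg[OF r d0] .
  have Phi1: "indicator {0..1 - rB\<^sup>2/4} r * (1 / ((1 - r) * sqrt (1 - r))) \<le> Phi rB r"
    using rB unfolding Phi_def by (simp add: indicator_def)
  have Phi2: "indicator {1 - rB\<^sup>2/4..1} r * (1024 / rB^3) \<le> Phi rB r"
    using r unfolding Phi_def by (simp add: indicator_def)
  have LHS: "(\<integral>\<^sup>+ x. indicator (- ball c (2*rB)) x * (indicator {0<..<1} r * ennreal (Hf (real CARD('n)) y x r)) \<partial>lborel)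
      = ennreal (Kf d r) * X"
  proof -
    have "(\<integral>\<^sup>+ x. indicator (- ball c (2*rB)) x * (indicator {0<..<1} r * ennreal (Hf (real CARD('n)) y x r)) \<partial>lborel)
       = (\<integral>\<^sup>+ x. ennreal (Kf d r) * (indicator (- ball c (2*rB)) x * ennreal (exp (- (norm (r *\<^sub>R y - x))\<^sup>2 / (2 * (1 - r\<^sup>2))))) \<partial>lborel)"
      using True K0 by (intro nn_integral_cong) (simp add: Hf_def d_def ennreal_mult mult_ac)
    also have "\<dots> = ennreal (Kf d r) * X"
      unfolding X_def by (rule nn_integral_cmult) measurable
    finally show ?thesis .
  qed
  have KS: "Kf d r * s ^ CARD('n) = 3 * d / (sqrt (1 - r) * (1 - r\<^sup>2))"
    unfolding d_def s_def by (rule Kf_s[OF r])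
  show ?thesis
  proof (cases "r \<le> 1 - rB\<^sup>2/4")
    case True
    have "ennreal (Kf d r) * X \<le> ennreal (Kf d r) * (ennreal (s ^ CARD('n)) * Mg TYPE('n))"
      unfolding X_def s_def by (intro mult_left_mono X_bound1[OF r]) auto
    also have "\<dots> = ennreal (3 * d / (sqrt (1 - r) * (1 - r\<^sup>2))) * Mg TYPE('n)"
      using K0 r2 by (simp add: ennreal_mult mult.assoc[symmetric] KS[symmetric] s_def)
    also have "\<dots> \<le> ennreal (3 * d * Phi rB r) * Mg TYPE('n)"
    proof (intro mult_right_mono ennreal_leI)
      have u0: "0 < 1 - r" "0 < sqrt (1 - r)" using r by auto
      have "1 - r \<le> 1 - r\<^sup>2" using r by (simp add: power2_eq_square mult_le_cancel_left1)
      then have "3 * d / (sqrt (1 - r) * (1 - r\<^sup>2)) \<le> 3 * d / (sqrt (1 - r) * (1 - r))"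
        using u0 d0 by (intro divide_left_mono mult_left_mono mult_pos_pos) auto
      also have "\<dots> = 3 * d * (indicator {0..1 - rB\<^sup>2/4} r * (1 / ((1 - r) * sqrt (1 - r))))"
        using True r by (simp add: indicator_def mult_ac)
      also have "\<dots> \<le> 3 * d * Phi rB r" using Phi1 d0 by (intro mult_left_mono) auto
      finally show "3 * d / (sqrt (1 - r) * (1 - r\<^sup>2)) \<le> 3 * d * Phi rB r" .
    qed auto
    finally show ?thesis unfolding LHS d_def .
  next
    case False
    have ry: "(1 - r) * norm y \<le> rB / 2"
    proof -
      have ny: "norm y \<le> norm c + rB"
        using y norm_triangle_ineq[of c "y - c"] by (simp add: dist_norm norm_minus_commute)
      have "(1 - r) * norm y \<le> rB\<^sup>2/4 * (norm c + rB)"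
        using False r ny by (intro mult_mono) auto
      also have "\<dots> = rB * (rB * norm c + rB * rB) / 4" by (simp add: power2_eq_square algebra_simps)
      also have "\<dots> \<le> rB * (1 + 1) / 4"
        using rB by (intro divide_right_mono mult_left_mono add_mono) (auto simp: mult_le_one)
      finally show ?thesis by simp
    qed
    have "ennreal (Kf d r) * X \<le> ennreal (Kf d r) * (ennreal (s ^ CARD('n)) * (ennreal (exp (- rB\<^sup>2 / (16 * (1 - r\<^sup>2)))) * Mg TYPE('n)))"
      unfolding X_def s_def by (intro mult_left_mono X_bound2[OF r y ry]) auto
    also have "\<dots> = ennreal (3 * d / (sqrt (1 - r) * (1 - r\<^sup>2)) * exp (- rB\<^sup>2 / (16 * (1 - r\<^sup>2)))) * Mg TYPE('n)"
      using K0 r2 by (simp add: ennreal_mult mult.assoc[symmetric] KS[symmetric] s_def)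
    also have "\<dots> \<le> ennreal (3 * d * Phi rB r) * Mg TYPE('n)"
    proof (intro mult_right_mono ennreal_leI)
      have "3 * d / (sqrt (1 - r) * (1 - r\<^sup>2)) * exp (- rB\<^sup>2 / (16 * (1 - r\<^sup>2))) \<le> 3 * d * (1024 / rB^3)"
        using False by (intro real_bound2[OF r rB(1) _ d0]) auto
      also have "\<dots> = 3 * d * (indicator {1 - rB\<^sup>2/4..1} r * (1024 / rB^3))"
        using False r by (simp add: indicator_def)
      also have "\<dots> \<le> 3 * d * Phi rB r" using Phi2 d0 by (intro mult_left_mono) auto
      finally show "3 * d / (sqrt (1 - r) * (1 - r\<^sup>2)) * exp (- rB\<^sup>2 / (16 * (1 - r\<^sup>2))) \<le> 3 * d * Phi rB r" .
    qed auto
    finally show ?thesis unfolding LHS d_def .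
  qed
qed




lemma Phi_nonneg: "0 < rB \<Longrightarrow> 0 \<le> Phi rB r"
proof -
  assume rB: "0 < rB"
  have "0 < rB\<^sup>2 / 4" using rB by simp
  then show ?thesis unfolding Phi_def indicator_def using rB
    by (auto intro!: add_nonneg_nonneg mult_nonneg_nonneg) (insert zero_le_power2[of rB], linarith)+
qed

theorem mainTheorem6:
  fixes i :: "'n::finite"
  shows "\<exists>C::real. \<forall>(c::real^'n) rB y. admissible c rB \<and> y \<in> ball c rB \<longrightarrow>
     ennreal rB * (\<integral>\<^sup>+ x. indicator (- ball c (2 * rB)) x * ennreal (norm (inner_int i x y)) \<partial>lborel)
       \<le> ennreal C"
proof -
  define d where "d = real CARD('n)"
  have Mfin: "Mg TYPE('n) \<noteq> \<infinity>" unfolding Mg_def using gauss_fin by (simp add: top.not_eq_extremum)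
  define Mr where "Mr = enn2real (Mg TYPE('n))"
  have M: "Mg TYPE('n) = ennreal Mr" unfolding Mr_def using Mfin by (simp add: less_top)
  have Mr0: "0 \<le> Mr" by (simp add: Mr_def)
  have Pf: "pair_sigma_finite (lborel::(real^'n) measure) (lborel::real measure)"
    by (intro pair_sigma_finite.intro sigma_finite_lborel)
  show ?thesis
  proof (intro exI[of _ "780 * d * Mr"] allI impI)
    fix c :: "real^'n" and rB :: real and y :: "real^'n"
    assume H: "admissible c rB \<and> y \<in> ball c rB"
    then have adm: "admissible c rB" and y: "y \<in> ball c rB" by auto
    have rB: "0 < rB" using adm by (simp add: admissible_def)
    define F where "F = (\<lambda>x r. indicator (- ball c (2*rB)) x * (indicator {0<..<1} r * ennreal (Hf d y x r)) :: ennreal)"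
    have Fm: "case_prod F \<in> borel_measurable (lborel \<Otimes>\<^sub>M lborel)"
      unfolding F_def Hf_def Kf_def by measurable
    have Fr: "(\<lambda>r. indicator {0<..<1} r * ennreal (Hf d y x r)) \<in> borel_measurable lborel" for x :: "real^'n"
      unfolding Hf_def Kf_def by measurable
    have "(\<integral>\<^sup>+ x. indicator (- ball c (2 * rB)) x * ennreal (norm (inner_int i x y)) \<partial>lborel)
        \<le> (\<integral>\<^sup>+ x. (\<integral>\<^sup>+ r. F x r \<partial>lborel) \<partial>lborel)"
    proof (rule nn_integral_mono)
      fix x :: "real^'n"
      have "indicator (- ball c (2 * rB)) x * ennreal (norm (inner_int i x y))
          \<le> indicator (- ball c (2 * rB)) x * (\<integral>\<^sup>+ r. indicator {0<..<1} r * ennreal (Hf d y x r) \<partial>lborel)"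
        by (intro mult_left_mono) (auto simp: d_def inner_int_bound)
      also have "\<dots> = (\<integral>\<^sup>+ r. F x r \<partial>lborel)"
        unfolding F_def by (rule nn_integral_cmult[symmetric, OF Fr])
      finally show "indicator (- ball c (2 * rB)) x * ennreal (norm (inner_int i x y)) \<le> (\<integral>\<^sup>+ r. F x r \<partial>lborel)" .
    qed
    also have "\<dots> = (\<integral>\<^sup>+ r. (\<integral>\<^sup>+ x. F x r \<partial>lborel) \<partial>lborel)"
      by (rule pair_sigma_finite.Fubini'[OF Pf Fm, symmetric])
    also have "\<dots> \<le> (\<integral>\<^sup>+ r. ennreal (3 * d * Mr) * ennreal (Phi rB r) \<partial>lborel)"
    proof (rule nn_integral_mono)
      fix r :: real
      have "(\<integral>\<^sup>+ x. F x r \<partial>lborel) \<le> ennreal (3 * d * Phi rB r) * Mg TYPE('n)"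
        unfolding F_def d_def by (rule r_bound[OF adm y])
      also have "\<dots> = ennreal (3 * d * Mr) * ennreal (Phi rB r)"
        unfolding M using Phi_nonneg[OF rB, of r] Mr0
        by (simp add: d_def ennreal_mult[symmetric] mult_ac)
      finally show "(\<integral>\<^sup>+ x. F x r \<partial>lborel) \<le> ennreal (3 * d * Mr) * ennreal (Phi rB r)" .
    qed
    also have "\<dots> = ennreal (3 * d * Mr) * (\<integral>\<^sup>+ r. ennreal (Phi rB r) \<partial>lborel)"
      by (rule nn_integral_cmult) (unfold Phi_def, measurable)
    also have "\<dots> \<le> ennreal (3 * d * Mr) * ennreal (260 / rB)"
      using adm by (intro mult_left_mono Phi_int) (auto simp: admissible_def)
    finally have I: "(\<integral>\<^sup>+ x. indicator (- ball c (2 * rB)) x * ennreal (norm (inner_int i x y)) \<partial>lborel)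
       \<le> ennreal (3 * d * Mr) * ennreal (260 / rB)" .
    have "ennreal rB * (\<integral>\<^sup>+ x. indicator (- ball c (2 * rB)) x * ennreal (norm (inner_int i x y)) \<partial>lborel)
       \<le> ennreal rB * (ennreal (3 * d * Mr) * ennreal (260 / rB))"
      by (intro mult_left_mono I) auto
    also have "\<dots> = ennreal (rB * (3 * d * Mr * (260 / rB)))"
    proof -
      have d0: "0 \<le> d" by (simp add: d_def)
      have a: "ennreal (3 * d * Mr) * ennreal (260 / rB) = ennreal (3 * d * Mr * (260 / rB))"
        by (rule ennreal_mult[symmetric]) (use rB Mr0 d0 in auto)
      have b: "ennreal rB * ennreal (3 * d * Mr * (260 / rB)) = ennreal (rB * (3 * d * Mr * (260 / rB)))"
        by (rule ennreal_mult[symmetric]) (use rB Mr0 d0 in auto)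
      show ?thesis unfolding a b ..
    qed
    also have "rB * (3 * d * Mr * (260 / rB)) = 780 * d * Mr" using rB by simp
    finally show "ennreal rB * (\<integral>\<^sup>+ x. indicator (- ball c (2 * rB)) x * ennreal (norm (inner_int i x y)) \<partial>lborel)
       \<le> ennreal (780 * d * Mr)" .
  qed
qed


end
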